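(* Let $k\ge1$ and let $G$ be a finite $k$-connected graph with $\mathrm{Ent}(G)=k$. Then $G$ is an abstract $k$-molecule.
   Context: Graphs are finite and undirected. A graph is $k$-connected if one must remove at least $k$ vertices to disconnect it; the connectivity is the largest such $k$ (by convention the complete graph $K_m$, $m\ge3$, has connectivity $m-1$). $k$-molecule: for $k,h\ge1$, $B_k=\{b_1,\dots,b_k\}$ and a set $\mathcal B$ of edges among vertices of $B_k$, the $k$-molecule $\vartheta_{B_k}^{\mathcal B,h}$ has vertex set $B_k\cup\{v_1,\dots,v_h\}$ and edge set $\mathcal B\cup\{v_ib_j:1\le i\le h,1\le j\le k\}$, with the requirement $h\ge k-k'$ where $k'$ is the connectivity of the subgraph induced by $B_k$. A graph $G$ is an abstract $k$-molecule if there are $B\subseteq V_G$ with $|B|=k$, a $k$-molecule $\vartheta_{B_k}^{\mathcal B,h}$ and an isomorphism $G\to\vartheta_{B_k}^{\mathcal B,h}$ mapping $B$ onto $B_k$. Entanglement: in the game $\mathrm{Ent}(G,k)$ Thief plays against $k$ cops on $G$. Initially no cop is placed and Thief picks a vertex. Each round, Cops may do nothing, place a new cop (at most $k$ in total) on Thief's current vertex, or move a placed cop to Thief's current vertex; then Thief must move along an edge to an adjacent vertex not occupied by a cop, and is caught (Cops win) if he cannot. Infinite plays are won by Thief. $\mathrm{Ent}(G)$ is the least $k$ for which Cops have a winning strategy. *)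

theory Defs
  imports Main
begin

definition graph :: "'a set \<Rightarrow> ('a \<Rightarrow> 'a \<Rightarrow> bool) \<Rightarrow> bool" where
  "graph V E \<longleftrightarrow> (\<forall>x y. E x y \<longrightarrow> x \<in> V \<and> y \<in> V \<and> x \<noteq> y \<and> E y x)"

definition connected_on :: "'a set \<Rightarrow> ('a \<Rightarrow> 'a \<Rightarrow> bool) \<Rightarrow> bool" where
  "connected_on S E \<longleftrightarrow> S \<noteq> {} \<and>
     (\<forall>x\<in>S. \<forall>y\<in>S. (\<lambda>a b. E a b \<and> a \<in> S \<and> b \<in> S)\<^sup>*\<^sup>* x y)"

text \<open>k-connected: more than k vertices, and removing fewer than k vertices
leaves a connected graph (so K_m has connectivity m-1).\<close>
definition k_connected :: "'a set \<Rightarrow> ('a \<Rightarrow> 'a \<Rightarrow> bool) \<Rightarrow> nat \<Rightarrow> bool" where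
  "k_connected V E k \<longleftrightarrow> card V > k \<and>
     (\<forall>X. X \<subseteq> V \<and> card X < k \<longrightarrow> connected_on (V - X) E)"

definition connectivity :: "'a set \<Rightarrow> ('a \<Rightarrow> 'a \<Rightarrow> bool) \<Rightarrow> nat" where
  "connectivity V E = (GREATEST k. k_connected V E k)"

text \<open>Vertices b_j are Inl j (1 \<le> j \<le> k), vertices v_i are Inr i (1 \<le> i \<le> h).
The set \<B> of edges among B_k is a set of 2-element subsets of {1..k}.\<close>

definition mol_V :: "nat \<Rightarrow> nat \<Rightarrow> (nat + nat) set" where
  "mol_V k h = Inl ` {1..k} \<union> Inr ` {1..h}"

definition mol_E :: "nat \<Rightarrow> nat \<Rightarrow> nat set set \<Rightarrow> (nat + nat) \<Rightarrow> (nat + nat) \<Rightarrow> bool" where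
  "mol_E k h Bs x y = (case (x, y) of
      (Inl a, Inl b) \<Rightarrow> a \<noteq> b \<and> {a, b} \<in> Bs
    | (Inl a, Inr i) \<Rightarrow> a \<in> {1..k} \<and> i \<in> {1..h}
    | (Inr i, Inl a) \<Rightarrow> a \<in> {1..k} \<and> i \<in> {1..h}
    | (Inr _, Inr _) \<Rightarrow> False)"

definition edges_among :: "nat \<Rightarrow> nat set set \<Rightarrow> bool" where
  "edges_among k Bs \<longleftrightarrow> (\<forall>e\<in>Bs. \<exists>a b. e = {a, b} \<and> a \<noteq> b \<and> a \<in> {1..k} \<and> b \<in> {1..k})"

definition is_molecule :: "nat \<Rightarrow> nat \<Rightarrow> nat set set \<Rightarrow> bool" where
  "is_molecule k h Bs \<longleftrightarrow> k \<ge> 1 \<and> h \<ge> 1 \<and> edges_among k Bs \<and>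
     h \<ge> k - connectivity (Inl ` {1..k}) (mol_E k h Bs)"

definition abstract_molecule :: "'a set \<Rightarrow> ('a \<Rightarrow> 'a \<Rightarrow> bool) \<Rightarrow> nat \<Rightarrow> bool" where
  "abstract_molecule V E k \<longleftrightarrow>
     (\<exists>B Bs h f. B \<subseteq> V \<and> card B = k \<and> is_molecule k h Bs \<and>
        bij_betw f V (mol_V k h) \<and>
        (\<forall>x\<in>V. \<forall>y\<in>V. E x y \<longleftrightarrow> mol_E k h Bs (f x) (f y)) \<and>
        f ` B = Inl ` {1..k})"

text \<open>Cops always occupy distinct vertices, so the number of placed cops is card C.\<close>
definition cop_move :: "nat \<Rightarrow> 'a set \<Rightarrow> 'a \<Rightarrow> 'a set \<Rightarrow> bool" where
  "cop_move k C v C' \<longleftrightarrow> C' = C \<or> (card C < k \<and> C' = insert v C) \<or>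
     (\<exists>c\<in>C. C' = insert v (C - {c}))"

text \<open>A cop strategy maps the (nonempty) history of thief positions
[x_0,...,x_n] (x_n current) to the new cop placement.\<close>

definition consistent_hist :: "'a set \<Rightarrow> ('a \<Rightarrow> 'a \<Rightarrow> bool) \<Rightarrow> ('a list \<Rightarrow> 'a set) \<Rightarrow> 'a list \<Rightarrow> bool" where
  "consistent_hist V E \<sigma> xs \<longleftrightarrow> xs \<noteq> [] \<and> xs ! 0 \<in> V \<and>
     (\<forall>i. Suc i < length xs \<longrightarrow> E (xs ! i) (xs ! Suc i) \<and> xs ! Suc i \<notin> \<sigma> (take (Suc i) xs))"

definition prev_cops :: "('a list \<Rightarrow> 'a set) \<Rightarrow> 'a list \<Rightarrow> 'a set" where
  "prev_cops \<sigma> xs = (if length xs \<le> 1 then {} else \<sigma> (butlast xs))"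

definition legal_strategy :: "'a set \<Rightarrow> ('a \<Rightarrow> 'a \<Rightarrow> bool) \<Rightarrow> nat \<Rightarrow> ('a list \<Rightarrow> 'a set) \<Rightarrow> bool" where
  "legal_strategy V E k \<sigma> \<longleftrightarrow> (\<forall>xs. consistent_hist V E \<sigma> xs \<longrightarrow>
      cop_move k (prev_cops \<sigma> xs) (last xs) (\<sigma> xs))"

definition thief_escapes :: "'a set \<Rightarrow> ('a \<Rightarrow> 'a \<Rightarrow> bool) \<Rightarrow> ('a list \<Rightarrow> 'a set) \<Rightarrow> bool" where
  "thief_escapes V E \<sigma> \<longleftrightarrow> (\<exists>p :: nat \<Rightarrow> 'a. p 0 \<in> V \<and>
      (\<forall>i. E (p i) (p (Suc i)) \<and> p (Suc i) \<notin> \<sigma> (map p [0..<Suc i])))"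

definition cops_win :: "'a set \<Rightarrow> ('a \<Rightarrow> 'a \<Rightarrow> bool) \<Rightarrow> nat \<Rightarrow> bool" where
  "cops_win V E k \<longleftrightarrow> (\<exists>\<sigma>. legal_strategy V E k \<sigma> \<and> \<not> thief_escapes V E \<sigma>)"

definition entanglement :: "'a set \<Rightarrow> ('a \<Rightarrow> 'a \<Rightarrow> bool) \<Rightarrow> nat" where
  "entanglement V E = (LEAST k. cops_win V E k)"

end

theory Submission
  imports Defs
begin


lemma graph_sym: "graph V E \<Longrightarrow> E x y \<Longrightarrow> E y x" by (auto simp: graph_def)
lemma graph_V: "graph V E \<Longrightarrow> E x y \<Longrightarrow> x \<in> V \<and> y \<in> V" by (auto simp: graph_def)
lemma graph_irr: "graph V E \<Longrightarrow> \<not> E x x" by (auto simp: graph_def)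
lemma nbhd_sub: "graph V E \<Longrightarrow> {z. E y z} \<subseteq> V" by (auto simp: graph_def)
lemma nbhd_fin: "finite V \<Longrightarrow> graph V E \<Longrightarrow> finite {z. E y z}"
  using nbhd_sub finite_subset by metis

lemma kc_conn: "k_connected V E k \<Longrightarrow> X \<subseteq> V \<Longrightarrow> card X < k \<Longrightarrow> connected_on (V - X) E"
  unfolding k_connected_def by blast

lemma kc_card: "k_connected V E k \<Longrightarrow> k < card V"
  unfolding k_connected_def by blast

lemma min_degree:
  assumes "finite V" "graph V E" "k_connected V E k" "y \<in> V"
  shows "card {z. E y z} \<ge> k"
proof (rule ccontr)
  assume "\<not> ?thesis"
  hence c: "card {z. E y z} < k" by simp
  let ?N = "{z. E y z}"
  have sub: "?N \<subseteq> V" using nbhd_sub[OF assms(2)] .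
  have con: "connected_on (V - ?N) E" using kc_conn[OF assms(3) sub c] .
  have cV: "card V > k" using kc_card[OF assms(3)] .
  have fin: "finite ?N" using nbhd_fin[OF assms(1,2)] .
  have "card (V - ?N) = card V - card ?N" using card_Diff_subset[OF fin sub] .
  hence c2: "card (V - ?N) \<ge> 2" using c cV by linarith
  have yin: "y \<in> V - ?N" using assms(4) graph_irr[OF assms(2)] by auto
  have "\<exists>w. w \<in> V - ?N \<and> w \<noteq> y"
  proof (rule ccontr)
    assume "\<not> ?thesis"
    hence "V - ?N \<subseteq> {y}" by auto
    hence "card (V - ?N) \<le> card {y}" by (intro card_mono) auto
    thus False using c2 by simp
  qed
  then obtain w where w: "w \<in> V - ?N" "w \<noteq> y" by blast
  have "(\<lambda>a b. E a b \<and> a \<in> V - ?N \<and> b \<in> V - ?N)\<^sup>*\<^sup>* y w"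
    using con yin w unfolding connected_on_def by blast
  then show False
  proof (rule converse_rtranclpE)
    assume "y = w" thus False using w by simp
  next
    fix b assume "E y b \<and> y \<in> V - ?N \<and> b \<in> V - ?N"
    thus False by auto
  qed
qed

lemma step_exists:
  assumes fin: "finite V" and g: "graph V E" and kc: "k_connected V E k" and k1: "k \<ge> 1"
    and nc: "\<not> (\<exists>s\<in>V. card {z. E s z} = k \<and> V \<subseteq> {z. E s z} \<union> {v\<in>V. {z. E v z} = {z. E s z}})"
    and y: "y \<in> V" and fC: "finite C" and cC: "card C \<le> k"
    and hyp: "y \<in> C \<or> {z. E y z} \<noteq> C"
  shows "\<exists>z. E y z \<and> z \<notin> C \<and> {w. E z w} \<noteq> C"
proof -
  have md: "\<And>v. v \<in> V \<Longrightarrow> card {z. E v z} \<ge> k" using min_degree[OF fin g kc] by blast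
  have nf: "\<And>v. finite {z. E v z}" using nbhd_fin[OF fin g] by blast
  show ?thesis
  proof (cases "y \<in> C")
    case False
    with hyp have ne: "{z. E y z} \<noteq> C" by simp
    have "\<not> {z. E y z} \<subseteq> C"
    proof
      assume s: "{z. E y z} \<subseteq> C"
      hence "card {z. E y z} \<le> card C" using fC by (rule card_mono[rotated])
      hence "card {z. E y z} = card C" using md[OF y] cC by linarith
      hence "{z. E y z} = C" using card_subset_eq[OF fC s] by simp
      thus False using ne by simp
    qed
    then obtain z where z: "E y z" "z \<notin> C" by blast
    have "y \<in> {w. E z w}" using graph_sym[OF g z(1)] by simp
    hence "{w. E z w} \<noteq> C" using False by blast
    thus ?thesis using z by blast
  next
    case True
    have ex: "\<exists>z. E y z \<and> z \<notin> C"
    proof (rule ccontr)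
      assume "\<not> ?thesis"
      hence "{z. E y z} \<subseteq> C - {y}" using graph_irr[OF g] by auto
      hence "card {z. E y z} \<le> card (C - {y})" using fC by (intro card_mono) auto
      also have "\<dots> = card C - 1" using True fC by simp
      finally have "card {z. E y z} \<le> card C - 1" .
      moreover have "card C > 0" using True fC by (auto simp: card_gt_0_iff)
      ultimately show False using md[OF y] cC by linarith
    qed
    show ?thesis
    proof (cases "card C < k")
      case True
      from ex obtain z where z: "E y z" "z \<notin> C" by blast
      have "card {w. E z w} \<ge> k" using md graph_V[OF g z(1)] by blast
      hence "{w. E z w} \<noteq> C" using True by auto
      thus ?thesis using z by blast
    next
      case False
      hence cCk: "card C = k" using cC by simp
      show ?thesis
      proof (rule ccontr)
        assume A: "\<not> ?thesis"
        from ex obtain z0 where z0: "E y z0" "z0 \<notin> C" by blast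
        have Nz0: "{w. E z0 w} = C" using A z0 by blast
        have z0V: "z0 \<in> V" using graph_V[OF g z0(1)] by blast
        obtain w where w: "w \<in> V" "w \<notin> C" "{x. E w x} \<noteq> C"
        proof -
          have "\<not> V \<subseteq> {z. E z0 z} \<union> {v\<in>V. {z. E v z} = {z. E z0 z}}"
            using nc z0V Nz0 cCk by blast
          then obtain w where "w \<in> V" "w \<notin> {z. E z0 z} \<union> {v\<in>V. {z. E v z} = {z. E z0 z}}"
            by blast
          thus ?thesis using that Nz0 by blast
        qed
        define Sat where "Sat = {v\<in>V. {x. E v x} = C}"
        define Enc where "Enc = {h\<in>C. {x. E h x} \<subseteq> C \<union> Sat}"
        define U where "U = C - Enc"
        have CV: "C \<subseteq> V" using Nz0 nbhd_sub[OF g, of z0] by simp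
        have yEnc: "y \<in> Enc" unfolding Enc_def Sat_def
          using True A graph_V[OF g] by blast
        have UV: "U \<subseteq> V" using CV by (auto simp: U_def)
        have "U \<subseteq> C - {y}" using yEnc by (auto simp: U_def)
        hence "card U \<le> card (C - {y})" using fC by (intro card_mono) auto
        also have "\<dots> = k - 1" using True fC cCk by simp
        finally have cU: "card U < k" using k1 by linarith
        have con: "connected_on (V - U) E" using kc_conn[OF kc UV cU] .
        have z0U: "z0 \<in> V - U" using z0V z0(2) by (auto simp: U_def)
        have wU: "w \<in> V - U" using w by (auto simp: U_def)
        have path: "(\<lambda>a b. E a b \<and> a \<in> V - U \<and> b \<in> V - U)\<^sup>*\<^sup>* z0 w"
          using con z0U wU unfolding connected_on_def by blast
        have "x \<in> Enc \<union> Sat" if "(\<lambda>a b. E a b \<and> a \<in> V - U \<and> b \<in> V - U)\<^sup>*\<^sup>* z0 x" for x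
          using that
        proof (induction rule: rtranclp_induct)
          case base
          then show ?case using z0V Nz0 by (simp add: Sat_def)
        next
          case (step a b)
          from step.hyps(2) have Eab: "E a b" and bU: "b \<in> V - U" by auto
          show ?case
          proof (cases "a \<in> Sat")
            case True
            hence "b \<in> C" using Eab by (auto simp: Sat_def)
            thus ?thesis using bU by (auto simp: U_def)
          next
            case False
            hence "a \<in> Enc" using step.IH by blast
            hence "b \<in> C \<union> Sat" using Eab by (auto simp: Enc_def)
            thus ?thesis using bU by (auto simp: U_def)
          qed
        qed
        from this[OF path] show False using w by (auto simp: Enc_def Sat_def)
      qed
    qed
  qed
qed



lemma connected_on_transfer:
  assumes "connected_on A E" "\<forall>x\<in>A. \<forall>y\<in>A. E x y \<longrightarrow> R (f x) (f y)"
  shows "connected_on (f ` A) R"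
  unfolding connected_on_def
proof (intro conjI ballI)
  show "f ` A \<noteq> {}" using assms(1) by (auto simp: connected_on_def)
  fix x' y' assume "x' \<in> f ` A" "y' \<in> f ` A"
  then obtain x y where xy: "x \<in> A" "y \<in> A" "x' = f x" "y' = f y" by blast
  have "(\<lambda>a b. E a b \<and> a \<in> A \<and> b \<in> A)\<^sup>*\<^sup>* x y" using assms(1) xy by (auto simp: connected_on_def)
  hence "(\<lambda>a b. R a b \<and> a \<in> f ` A \<and> b \<in> f ` A)\<^sup>*\<^sup>* (f x) (f y)"
  proof (induction rule: rtranclp_induct)
    case base then show ?case by simp
  next
    case (step a b)
    have "R (f a) (f b) \<and> f a \<in> f ` A \<and> f b \<in> f ` A" using step.hyps(2) assms(2) by auto
    with step.IH show ?case by (rule rtranclp.rtrancl_into_rtrancl)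
  qed
  thus "(\<lambda>a b. R a b \<and> a \<in> f ` A \<and> b \<in> f ` A)\<^sup>*\<^sup>* x' y'" using xy by simp
qed

lemma molecule_case:
  assumes k1: "k \<ge> 1" and fin: "finite V" and g: "graph V E" and kc: "k_connected V E k"
    and s: "s \<in> V" and cs: "card {z. E s z} = k"
    and cov: "V \<subseteq> {z. E s z} \<union> {v\<in>V. {z. E v z} = {z. E s z}}"
  shows "abstract_molecule V E k"
proof -
  define H where "H = {z. E s z}"
  define S where "S = {v\<in>V. {z. E v z} = H}"
  have HV: "H \<subseteq> V" using g by (auto simp: H_def graph_def)
  have finH: "finite H" using HV fin finite_subset by blast
  have finS: "finite S" using fin by (auto simp: S_def)
  have disj: "H \<inter> S = {}"
  proof (rule ccontr)
    assume "H \<inter> S \<noteq> {}"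
    then obtain v where "v \<in> H" "v \<in> S" by blast
    hence "E v v" by (auto simp: S_def)
    thus False using graph_irr[OF g] by blast
  qed
  have VHS: "V = H \<union> S" using cov HV by (auto simp: H_def S_def)
  have sS: "s \<in> S" using s by (simp add: S_def H_def)
  define h where "h = card S"
  have h1: "h \<ge> 1" using sS finS by (auto simp: h_def card_gt_0_iff Suc_le_eq)
  have cH: "card H = k" using cs by (simp add: H_def)
  obtain gH where gH: "bij_betw gH {1..k} H" using ex_bij_betw_nat_finite_1[OF finH] cH by auto
  obtain gS where gS: "bij_betw gS {1..h} S" using ex_bij_betw_nat_finite_1[OF finS] h_def by auto
  define iH where "iH = inv_into {1..k} gH"
  define iS where "iS = inv_into {1..h} gS"
  have biH: "bij_betw iH H {1..k}" unfolding iH_def by (rule bij_betw_inv_into[OF gH])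
  have biS: "bij_betw iS S {1..h}" unfolding iS_def by (rule bij_betw_inv_into[OF gS])
  have gi: "\<And>x. x \<in> H \<Longrightarrow> gH (iH x) = x" unfolding iH_def using bij_betw_inv_into_right[OF gH] by blast
  have ig: "\<And>a. a \<in> {1..k} \<Longrightarrow> iH (gH a) = a" unfolding iH_def using bij_betw_inv_into_left[OF gH] by blast
  define f where "f = (\<lambda>x. if x \<in> H then Inl (iH x) else Inr (iS x) :: nat + nat)"
  define Bs where "Bs = {{a,b} | a b. a \<in> {1..k} \<and> b \<in> {1..k} \<and> a \<noteq> b \<and> E (gH a) (gH b)}"
  have fH: "\<And>x. x \<in> H \<Longrightarrow> f x = Inl (iH x)" by (simp add: f_def)
  have fS: "\<And>x. x \<in> S \<Longrightarrow> f x = Inr (iS x)" using disj by (auto simp: f_def)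
  have iHr: "\<And>x. x \<in> H \<Longrightarrow> iH x \<in> {1..k}" using biH by (auto simp: bij_betw_def)
  have iSr: "\<And>x. x \<in> S \<Longrightarrow> iS x \<in> {1..h}" using biS by (auto simp: bij_betw_def)
  have injH: "inj_on iH H" using biH by (auto simp: bij_betw_def)
  have injS: "inj_on iS S" using biS by (auto simp: bij_betw_def)
  have imH: "f ` H = Inl ` {1..k}"
  proof -
    have "f ` H = Inl ` (iH ` H)" using fH by (auto simp: image_iff)
    also have "iH ` H = {1..k}" using biH by (simp add: bij_betw_def)
    finally show ?thesis .
  qed
  have imS: "f ` S = Inr ` {1..h}"
  proof -
    have "f ` S = Inr ` (iS ` S)" using fS by (auto simp: image_iff)
    also have "iS ` S = {1..h}" using biS by (simp add: bij_betw_def)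
    finally show ?thesis .
  qed
  have bij: "bij_betw f V (mol_V k h)"
  proof (rule bij_betw_imageI)
    show "inj_on f V" unfolding VHS
    proof (rule inj_onI)
      fix x y assume xy: "x \<in> H \<union> S" "y \<in> H \<union> S" "f x = f y"
      show "x = y"
        using xy disj fH fS injH injS by (auto dest: inj_onD)
    qed
    show "f ` V = mol_V k h" unfolding VHS mol_V_def using imH imS by (simp add: image_Un)
  qed
  have edges: "\<forall>x\<in>V. \<forall>y\<in>V. E x y \<longleftrightarrow> mol_E k h Bs (f x) (f y)"
  proof (intro ballI)
    fix x y assume x: "x \<in> V" and y: "y \<in> V"
    show "E x y \<longleftrightarrow> mol_E k h Bs (f x) (f y)"
    proof (cases "x \<in> H")
      case xH: True
      show ?thesis
      proof (cases "y \<in> H")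
        case yH: True
        have "E x y \<longleftrightarrow> iH x \<noteq> iH y \<and> {iH x, iH y} \<in> Bs"
        proof
          assume Exy: "E x y"
          have "x \<noteq> y" using Exy graph_irr[OF g] by blast
          hence ne: "iH x \<noteq> iH y" using injH xH yH by (auto dest: inj_onD)
          moreover have "\<exists>a b. {iH x, iH y} = {a,b} \<and> a \<in> {1..k} \<and> b \<in> {1..k} \<and> a \<noteq> b \<and> E (gH a) (gH b)"
            using ne iHr[OF xH] iHr[OF yH] gi[OF xH] gi[OF yH] Exy by metis
          hence "{iH x, iH y} \<in> Bs" unfolding Bs_def by blast
          ultimately show "iH x \<noteq> iH y \<and> {iH x, iH y} \<in> Bs" by simp
        next
          assume "iH x \<noteq> iH y \<and> {iH x, iH y} \<in> Bs"
          then obtain a b where ab: "{iH x, iH y} = {a,b}" "a \<in> {1..k}" "b \<in> {1..k}" "E (gH a) (gH b)"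
            unfolding Bs_def by blast
          from ab(1) have "(iH x = a \<and> iH y = b) \<or> (iH x = b \<and> iH y = a)" by (auto simp: doubleton_eq_iff)
          thus "E x y"
          proof
            assume "iH x = a \<and> iH y = b"
            thus ?thesis using ab(4) gi xH yH by metis
          next
            assume "iH x = b \<and> iH y = a"
            hence "E y x" using ab(4) gi xH yH by metis
            thus ?thesis using graph_sym[OF g] by blast
          qed
        qed
        thus ?thesis using fH xH yH by (simp add: mol_E_def)
      next
        case yH: False
        hence yS: "y \<in> S" using y VHS by blast
        hence "E y x" using xH by (auto simp: S_def)
        hence "E x y" using graph_sym[OF g] by blast
        thus ?thesis using fH fS xH yS iHr iSr by (simp add: mol_E_def)
      qed
    next
      case xH: False
      hence xS: "x \<in> S" using x VHS by blast
      show ?thesis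
      proof (cases "y \<in> H")
        case yH: True
        hence "E x y" using xS by (auto simp: S_def)
        thus ?thesis using fH fS yH xS iHr iSr by (simp add: mol_E_def)
      next
        case yH: False
        hence yS: "y \<in> S" using y VHS by blast
        have "\<not> E x y" using xS yH by (auto simp: S_def)
        thus ?thesis using fS xS yS by (simp add: mol_E_def)
      qed
    qed
  qed
  have ea: "edges_among k Bs" unfolding edges_among_def Bs_def by blast
  have hk: "h \<ge> k - connectivity (Inl ` {1..k}) (mol_E k h Bs)"
  proof (cases "h \<ge> k")
    case True thus ?thesis by linarith
  next
    case False
    have cardB: "card (Inl ` {1..k} :: (nat+nat) set) = k" by (simp add: card_image)
    have kcB: "k_connected (Inl ` {1..k}) (mol_E k h Bs) (k - h)"
      unfolding k_connected_def
    proof (intro conjI allI impI)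
      show "k - h < card (Inl ` {1..k} :: (nat+nat) set)" using cardB h1 k1 by simp
      fix X :: "(nat+nat) set" assume X: "X \<subseteq> Inl ` {1..k} \<and> card X < k - h"
      define X' where "X' = {x\<in>H. f x \<in> X}"
      have finX: "finite X" using X finite_subset by blast
      have "card X' \<le> card X"
      proof (rule card_inj_on_le[OF _ _ finX])
        show "inj_on f X'"
        proof (rule inj_onI)
          fix a b assume ab: "a \<in> X'" "b \<in> X'" "f a = f b"
          hence "a \<in> H" "b \<in> H" by (auto simp: X'_def)
          thus "a = b" using ab(3) fH injH by (auto dest: inj_onD)
        qed
        show "f ` X' \<subseteq> X" by (auto simp: X'_def)
      qed
      hence "card (X' \<union> S) < k" using card_Un_le[of X' S] X h_def by linarith
      moreover have "X' \<union> S \<subseteq> V" using VHS by (auto simp: X'_def)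
      ultimately have "connected_on (V - (X' \<union> S)) E" using kc_conn[OF kc] by blast
      moreover have "V - (X' \<union> S) = H - X'" using VHS disj by auto
      ultimately have con: "connected_on (H - X') E" by simp
      have "connected_on (f ` (H - X')) (mol_E k h Bs)"
      proof (rule connected_on_transfer[OF con], intro ballI impI)
        fix a b assume "a \<in> H - X'" "b \<in> H - X'" "E a b"
        moreover have "a \<in> V" "b \<in> V" using \<open>a \<in> H - X'\<close> \<open>b \<in> H - X'\<close> VHS by auto
        ultimately show "mol_E k h Bs (f a) (f b)" using edges by blast
      qed
      moreover have "f ` (H - X') = Inl ` {1..k} - X"
      proof
        show "f ` (H - X') \<subseteq> Inl ` {1..k} - X" using imH by (auto simp: X'_def)
        show "Inl ` {1..k} - X \<subseteq> f ` (H - X')"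
        proof
          fix u assume u: "u \<in> Inl ` {1..k} - X"
          then obtain a where a: "a \<in> {1..k}" "u = Inl a" by blast
          have gaH: "gH a \<in> H" using gH a(1) by (auto simp: bij_betw_def)
          have "f (gH a) = u" using fH[OF gaH] ig[OF a(1)] a(2) by simp
          thus "u \<in> f ` (H - X')" using gaH u by (auto simp: X'_def)
        qed
      qed
      ultimately show "connected_on (Inl ` {1..k} - X) (mol_E k h Bs)" by simp
    qed
    have "k - h \<le> connectivity (Inl ` {1..k}) (mol_E k h Bs)"
      unfolding connectivity_def
    proof (rule Greatest_le_nat[where P="\<lambda>j. k_connected (Inl ` {1..k}) (mol_E k h Bs) j", OF kcB])
      fix j assume "k_connected (Inl ` {1..k}) (mol_E k h Bs) j"
      thus "j \<le> k" using cardB kc_card by fastforce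
    qed
    thus ?thesis by linarith
  qed
  have mol: "is_molecule k h Bs" unfolding is_molecule_def using k1 h1 ea hk by simp
  show ?thesis unfolding abstract_molecule_def
    apply (rule exI[of _ H], rule exI[of _ Bs], rule exI[of _ h], rule exI[of _ f])
    using HV cH mol bij edges imH by simp
qed



lemma cops_win_card:
  assumes fin: "finite V" and g: "graph V E"
  shows "cops_win V E (card V)"
proof -
  have leg: "legal_strategy V E (card V) set"
    unfolding legal_strategy_def
  proof (intro allI impI)
    fix xs assume ch: "consistent_hist V E set xs"
    have ne: "xs \<noteq> []" and x0: "xs ! 0 \<in> V"
      and st: "\<And>i. Suc i < length xs \<Longrightarrow> E (xs!i) (xs ! Suc i) \<and> xs ! Suc i \<notin> set (take (Suc i) xs)"
      using ch unfolding consistent_hist_def by auto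
    have allV: "set xs \<subseteq> V"
    proof
      fix x assume "x \<in> set xs"
      then obtain j where j: "j < length xs" "x = xs ! j" by (auto simp: in_set_conv_nth)
      show "x \<in> V"
      proof (cases j)
        case 0 thus ?thesis using x0 j by simp
      next
        case (Suc i)
        thus ?thesis using st[of i] j graph_V[OF g] by blast
      qed
    qed
    have lastV: "last xs \<in> V" using allV ne by auto
    show "cop_move (card V) (prev_cops set xs) (last xs) (set xs)"
    proof (cases "length xs \<le> 1")
      case True
      then obtain x where xs: "xs = [x]" using ne by (cases xs) auto
      have "card V > 0" using lastV fin by (auto simp: card_gt_0_iff)
      thus ?thesis using xs by (simp add: prev_cops_def cop_move_def)
    next
      case False
      have pc: "prev_cops set xs = set (butlast xs)" using False by (simp add: prev_cops_def)
      have sx: "set xs = insert (last xs) (set (butlast xs))"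
        using ne by (metis append_butlast_last_id list.simps(15) set_append Un_insert_right sup_bot.right_neutral set_empty2 insert_is_Un sup_commute)
      define i where "i = length xs - 2"
      have si: "Suc i < length xs" using False by (simp add: i_def)
      have li: "Suc i = length xs - 1" using False by (simp add: i_def)
      have "xs ! Suc i = last xs" using ne by (simp add: li last_conv_nth)
      moreover have "take (Suc i) xs = butlast xs" by (simp only: li butlast_conv_take)
      ultimately have nl: "last xs \<notin> set (butlast xs)" using st[OF si] by simp
      have "set (butlast xs) \<subset> V" using allV sx nl lastV by auto
      hence "card (set (butlast xs)) < card V" using fin by (rule psubset_card_mono[rotated])
      thus ?thesis using pc sx by (simp add: cop_move_def)
    qed
  qed
  have "\<not> thief_escapes V E set"
  proof
    assume "thief_escapes V E set"
    then obtain p where p0: "p 0 \<in> V"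
      and ps: "\<And>i. E (p i) (p (Suc i)) \<and> p (Suc i) \<notin> set (map p [0..<Suc i])"
      unfolding thief_escapes_def by blast
    have pV: "p i \<in> V" for i
      using p0 ps[of "i - 1"] graph_V[OF g] by (cases i) auto
    have ne: "p i \<noteq> p j" if "i < j" for i j
    proof -
      define j' where "j' = j - 1"
      have j': "j = Suc j'" using that by (simp add: j'_def)
      have "i < Suc j'" using that j' by simp
      hence "p i \<in> set (map p [0..<Suc j'])" by (simp only: set_map set_upt) (rule imageI, simp)
      moreover have "p (Suc j') \<notin> set (map p [0..<Suc j'])" using ps[of j'] by blast
      ultimately show ?thesis using j' by metis
    qed
    have "inj p"
    proof (rule injI)
      fix i j assume "p i = p j"
      thus "i = j" using ne[of i j] ne[of j i] by (metis linorder_neqE_nat)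
    qed
    moreover have "range p \<subseteq> V" using pV by auto
    hence "finite (range p)" using fin finite_subset by blast
    ultimately have "finite (UNIV :: nat set)" using finite_imageD by blast
    thus False by simp
  qed
  thus ?thesis using leg unfolding cops_win_def by blast
qed


theorem mainTheorem4:
  fixes V :: "'a set" and E :: "'a \<Rightarrow> 'a \<Rightarrow> bool" and k :: nat
  assumes "k \<ge> 1"
    and "finite V"
    and "graph V E"
    and "k_connected V E k"
    and "entanglement V E = k"
  shows "abstract_molecule V E k"
proof (cases "\<exists>s\<in>V. card {z. E s z} = k \<and> V \<subseteq> {z. E s z} \<union> {v\<in>V. {z. E v z} = {z. E s z}}")
  case True
  then obtain s where s: "s \<in> V" "card {z. E s z} = k"
    "V \<subseteq> {z. E s z} \<union> {v\<in>V. {z. E v z} = {z. E s z}}" by blast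
  show ?thesis by (rule molecule_case[OF assms(1,2,3,4) s])
next
  case False
  have "cops_win V E (entanglement V E)" unfolding entanglement_def
    by (rule LeastI[of _ "card V"]) (rule cops_win_card[OF assms(2,3)])
  hence cw: "cops_win V E k" using assms(5) by simp
  then obtain \<sigma> where leg: "legal_strategy V E k \<sigma>" and nesc: "\<not> thief_escapes V E \<sigma>"
    unfolding cops_win_def by blast
  have "card V > 0" using kc_card[OF assms(4)] by simp
  hence "V \<noteq> {}" by auto
  then obtain x0 where x0: "x0 \<in> V" by blast
  define nxt where "nxt = (\<lambda>xs. SOME z. E (last xs) z \<and> z \<notin> \<sigma> xs \<and> {w. E z w} \<noteq> \<sigma> xs)"
  define hs where "hs = rec_nat [x0] (\<lambda>_ xs. xs @ [nxt xs])"
  have hs0: "hs 0 = [x0]" by (simp add: hs_def)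
  have hsS: "hs (Suc i) = hs i @ [nxt (hs i)]" for i by (simp add: hs_def)
  define p where "p = (\<lambda>i. last (hs i))"
  have pS: "p (Suc i) = nxt (hs i)" for i by (simp add: p_def hsS)
  have p0: "p 0 = x0" by (simp add: p_def hs0)
  have hm: "hs i = map p [0..<Suc i]" for i
  proof (induction i)
    case 0 show ?case by (simp add: hs0 p0)
  next
    case (Suc i)
    show ?case using Suc.IH hsS[of i] pS[of i] by simp
  qed
  define Inv where "Inv = (\<lambda>i. p i \<in> V \<and> finite (\<sigma> (hs i)) \<and> card (\<sigma> (hs i)) \<le> k \<and>
      (p i \<in> \<sigma> (hs i) \<or> {z. E (p i) z} \<noteq> \<sigma> (hs i)))"
  have stp: "E (p i) (p (Suc i)) \<and> p (Suc i) \<notin> \<sigma> (hs i) \<and> {w. E (p (Suc i)) w} \<noteq> \<sigma> (hs i)"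
    if I: "Inv i" for i
  proof -
    have "p i \<in> V" "finite (\<sigma> (hs i))" "card (\<sigma> (hs i)) \<le> k"
      "p i \<in> \<sigma> (hs i) \<or> {z. E (p i) z} \<noteq> \<sigma> (hs i)" using I unfolding Inv_def by auto
    from step_exists[OF assms(2,3,4,1) False this]
    have "\<exists>z. E (last (hs i)) z \<and> z \<notin> \<sigma> (hs i) \<and> {w. E z w} \<noteq> \<sigma> (hs i)"
      by (simp add: p_def)
    hence "E (last (hs i)) (nxt (hs i)) \<and> nxt (hs i) \<notin> \<sigma> (hs i) \<and> {w. E (nxt (hs i)) w} \<noteq> \<sigma> (hs i)"
      unfolding nxt_def by (rule someI_ex)
    thus ?thesis unfolding pS by (simp add: p_def)
  qed
  have ch: "consistent_hist V E \<sigma> (hs n)" if A: "\<forall>j<n. Inv j" for n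
    unfolding consistent_hist_def hm
  proof (intro conjI allI impI)
    show "map p [0..<Suc n] \<noteq> []" by simp
    show "map p [0..<Suc n] ! 0 \<in> V" using x0 p0 by (simp del: upt_Suc add: nth_map)
    fix i assume "Suc i < length (map p [0..<Suc n])"
    hence i: "i < n" by simp
    have tk: "take (Suc i) (map p [0..<Suc n]) = map p [0..<Suc i]"
      using i by (simp add: take_map del: upt_Suc)
    have e1: "map p [0..<Suc n] ! i = p i" using i by (simp del: upt_Suc add: nth_map)
    have e2: "map p [0..<Suc n] ! Suc i = p (Suc i)" using i by (simp del: upt_Suc add: nth_map)
    have "E (p i) (p (Suc i)) \<and> p (Suc i) \<notin> \<sigma> (hs i)" using stp A i by blast
    thus "E (map p [0..<Suc n] ! i) (map p [0..<Suc n] ! Suc i)"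
      "map p [0..<Suc n] ! Suc i \<notin> \<sigma> (take (Suc i) (map p [0..<Suc n]))"
      using e1 e2 tk hm[of i] by simp_all
  qed
  have allInv: "\<forall>j\<le>n. Inv j" for n
  proof (induction n)
    case 0
    have "consistent_hist V E \<sigma> (hs 0)" using ch[of 0] by simp
    hence "cop_move k (prev_cops \<sigma> (hs 0)) (last (hs 0)) (\<sigma> (hs 0))"
      using leg unfolding legal_strategy_def by blast
    hence cm: "cop_move k {} x0 (\<sigma> [x0])" by (simp add: hs0 prev_cops_def)
    have md: "card {z. E x0 z} \<ge> k" using min_degree[OF assms(2,3,4) x0] .
    have "{z. E x0 z} \<noteq> {}"
    proof
      assume "{z. E x0 z} = {}"
      thus False using md assms(1) by simp
    qed
    hence "Inv 0" using cm x0 assms(1) unfolding Inv_def cop_move_def by (auto simp: hs0 p0)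
    thus ?case by simp
  next
    case (Suc n)
    have A: "\<forall>j<Suc n. Inv j" using Suc.IH by auto
    have "consistent_hist V E \<sigma> (hs (Suc n))" using ch A by blast
    hence "cop_move k (prev_cops \<sigma> (hs (Suc n))) (last (hs (Suc n))) (\<sigma> (hs (Suc n)))"
      using leg unfolding legal_strategy_def by blast
    moreover have "prev_cops \<sigma> (hs (Suc n)) = \<sigma> (hs n)"
    proof -
      have "length (hs (Suc n)) = Suc (Suc n)" using hm[of "Suc n"] by (simp del: upt_Suc)
      moreover have "butlast (hs (Suc n)) = hs n" using hsS[of n] by (simp only: butlast_snoc)
      ultimately show ?thesis by (simp add: prev_cops_def)
    qed
    moreover have "last (hs (Suc n)) = p (Suc n)" by (simp add: p_def)
    ultimately have cm: "cop_move k (\<sigma> (hs n)) (p (Suc n)) (\<sigma> (hs (Suc n)))" by simp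
    have In: "Inv n" using Suc.IH by simp
    hence fC: "finite (\<sigma> (hs n))" and cC: "card (\<sigma> (hs n)) \<le> k" unfolding Inv_def by auto
    have st: "E (p n) (p (Suc n))" "p (Suc n) \<notin> \<sigma> (hs n)" "{w. E (p (Suc n)) w} \<noteq> \<sigma> (hs n)"
      using stp[OF In] by auto
    have pV: "p (Suc n) \<in> V" using graph_V[OF assms(3) st(1)] by blast
    have "Inv (Suc n)"
      using cm unfolding cop_move_def
    proof (elim disjE)
      assume "\<sigma> (hs (Suc n)) = \<sigma> (hs n)"
      thus "Inv (Suc n)" using fC cC st pV unfolding Inv_def by simp
    next
      assume "card (\<sigma> (hs n)) < k \<and> \<sigma> (hs (Suc n)) = insert (p (Suc n)) (\<sigma> (hs n))"
      thus "Inv (Suc n)" using fC pV unfolding Inv_def by (auto simp: card_insert_if)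
    next
      assume "\<exists>c\<in>\<sigma> (hs n). \<sigma> (hs (Suc n)) = insert (p (Suc n)) (\<sigma> (hs n) - {c})"
      then obtain c where c: "c \<in> \<sigma> (hs n)" "\<sigma> (hs (Suc n)) = insert (p (Suc n)) (\<sigma> (hs n) - {c})" by blast
      have "card (insert (p (Suc n)) (\<sigma> (hs n) - {c})) \<le> Suc (card (\<sigma> (hs n) - {c}))"
        by (simp add: card_insert_le_m1)
      also have "\<dots> = card (\<sigma> (hs n))" using c(1) fC
        using card_Suc_Diff1 by metis
      finally show "Inv (Suc n)" using c fC cC pV unfolding Inv_def by simp
    qed
    thus ?case using Suc.IH le_Suc_eq by auto
  qed
  have "thief_escapes V E \<sigma>"
    unfolding thief_escapes_def
  proof (rule exI[of _ p], rule conjI)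
    show "p 0 \<in> V" using p0 x0 by simp
    show "\<forall>i. E (p i) (p (Suc i)) \<and> p (Suc i) \<notin> \<sigma> (map p [0..<Suc i])"
    proof
      fix i
      have "Inv i" using allInv by blast
      hence "E (p i) (p (Suc i)) \<and> p (Suc i) \<notin> \<sigma> (hs i)" using stp by blast
      thus "E (p i) (p (Suc i)) \<and> p (Suc i) \<notin> \<sigma> (map p [0..<Suc i])"
        using hm[of i] by (simp del: upt_Suc)
    qed
  qed
  with nesc show ?thesis by contradiction
qed

end
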